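(* Let $n\ge 2$ be an integer and set, for real $r$ with $|r|>1$, $\rho(r)=r-\frac{|r|}{r}\sqrt{r^2-1}$. Then for every real $r$ with $|r|>1$, $$\int_{-1}^1 \frac{T_n(s)(1-s^2)^{\frac{3}{2}}}{(s-r)^3}\,ds = \frac{\pi}{4}\left\{\rho(r)^{n+1}\left[(n^2+2n+3)-3(n+1)\frac{|r|}{\sqrt{r^2-1}}\right]-\rho(r)^{n-1}\left[(n^2-2n+3)-3(n-1)\frac{|r|}{\sqrt{r^2-1}}\right]\right\}.$$
   Context: $T_k(s)=\cos(k\cos^{-1}s)$ is the Tchebyshev polynomial of the first kind. Since $|r|>1$, the integral is an ordinary (nonsingular) integral. *)

theory Defs
  imports "HOL-Analysis.Analysis"
begin

definition cheb_T :: "nat \<Rightarrow> real \<Rightarrow> real" where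
  "cheb_T k s = cos (real k * arccos s)"

definition rho :: "real \<Rightarrow> real" where
  "rho r = r - (\<bar>r\<bar> / r) * sqrt (r\<^sup>2 - 1)"

end

theory Submission
  imports Defs
begin

definition CI :: "real \<Rightarrow> nat \<Rightarrow> nat \<Rightarrow> real" where
  "CI r m k = integral {-pi..0} (\<lambda>t. cos (real k * t) / (cos t - r)^m)"

lemma cr_ne': fixes r t :: real assumes "\<bar>r\<bar> > 1" shows "cos t \<noteq> r"
proof
  assume "cos t = r"
  with assms show False using abs_cos_le_one[of t] by linarith
qed

lemma cr_ne: fixes r t :: real assumes "\<bar>r\<bar> > 1" shows "cos t - r \<noteq> 0"
  using cr_ne'[OF assms, of t] by simp

lemma CI_has: "\<bar>r\<bar> > 1 \<Longrightarrow>
  ((\<lambda>t. cos (real k * t) / (cos t - r)^m) has_integral CI r m k) {-pi..0}"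
  unfolding CI_def
  by (intro integrable_integral integrable_continuous_interval continuous_intros)
     (use cr_ne' in auto)

lemma CI0_0: "CI r 0 0 = pi"
  unfolding CI_def by simp

lemma CI0_Suc: "CI r 0 (Suc j) = 0"
proof -
  let ?k = "real (Suc j)"
  have "((\<lambda>t. cos (?k * t)) has_integral (sin (?k * 0) / ?k - sin (?k * (-pi)) / ?k)) {-pi..0}"
    apply (rule fundamental_theorem_of_calculus)
     apply simp
    unfolding has_real_derivative_iff_has_vector_derivative [symmetric]
    apply (rule derivative_eq_intros refl | simp)+
    done
  moreover have "sin (?k * (-pi)) = 0"
    by (metis minus_mult_right sin_minus sin_npi neg_equal_0_iff_equal)
  ultimately show ?thesis unfolding CI_def by (simp add: integral_unique)
qed

lemma cos_sum2: "cos (real (j+2) * t) + cos (real j * t) = 2 * cos t * cos (real (Suc j) * t)"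
proof -
  have a: "real (j+2) * t = real (Suc j) * t + t" and b: "real j * t = real (Suc j) * t - t"
    by (simp_all add: algebra_simps)
  show ?thesis unfolding a b cos_add cos_diff by simp
qed

lemma sin_prod: "sin (real (Suc j) * t) * sin t = (cos (real j * t) - cos (real (j+2) * t)) / 2"
proof -
  have a: "real (j+2) * t = real (Suc j) * t + t" and b: "real j * t = real (Suc j) * t - t"
    by (simp_all add: algebra_simps)
  show ?thesis unfolding a b cos_add cos_diff by simp
qed

lemma MUL: assumes r: "\<bar>r\<bar> > 1"
  shows "CI r (Suc i) (j+2) + CI r (Suc i) j - 2*r*CI r (Suc i) (Suc j) = 2 * CI r i (Suc j)"
proof -
  let ?f = "\<lambda>k t. cos (real k * t) / (cos t - r)^Suc i"
  have h: "((\<lambda>t. ?f (j+2) t + ?f j t - 2*r*?f (Suc j) t) has_integral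
     (CI r (Suc i) (j+2) + CI r (Suc i) j - 2*r*CI r (Suc i) (Suc j))) {-pi..0}"
    by (intro has_integral_diff has_integral_add has_integral_mult_right CI_has r)
  have e: "?f (j+2) t + ?f j t - 2*r*?f (Suc j) t = 2 * (cos (real (Suc j) * t) / (cos t - r)^i)" for t
  proof -
    have "?f (j+2) t + ?f j t - 2*r*?f (Suc j) t
        = (cos (real (j+2) * t) + cos (real j * t) - 2*r*cos (real (Suc j) * t)) / (cos t - r)^Suc i"
      by (simp add: add_divide_distrib diff_divide_distrib)
    also have "\<dots> = 2 * cos (real (Suc j) * t) * (cos t - r) / (cos t - r)^Suc i"
      unfolding cos_sum2 by (simp add: algebra_simps)
    also have "\<dots> = 2 * (cos (real (Suc j) * t) / (cos t - r)^i)"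
      using cr_ne[OF r, of t] by (simp add: field_simps)
    finally show ?thesis .
  qed
  have "((\<lambda>t. 2 * (cos (real (Suc j) * t) / (cos t - r)^i)) has_integral 2 * CI r i (Suc j)) {-pi..0}"
    by (intro has_integral_mult_right CI_has r)
  with h show ?thesis unfolding e by (rule has_integral_unique)
qed

lemma MUL0: assumes r: "\<bar>r\<bar> > 1"
  shows "CI r (Suc i) 1 - r*CI r (Suc i) 0 = CI r i 0"
proof -
  let ?f = "\<lambda>k t. cos (real k * t) / (cos t - r)^Suc i"
  have h: "((\<lambda>t. ?f 1 t - r*?f 0 t) has_integral
     (CI r (Suc i) 1 - r*CI r (Suc i) 0)) {-pi..0}"
    by (intro has_integral_diff has_integral_mult_right CI_has r)
  have e: "?f 1 t - r*?f 0 t = cos (real 0 * t) / (cos t - r)^i" for t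
  proof -
    have "?f 1 t - r*?f 0 t = (cos t - r) / ((cos t - r) * (cos t - r)^i)"
      by (simp add: diff_divide_distrib)
    also have "\<dots> = cos (real 0 * t) / (cos t - r)^i"
      using cr_ne[OF r, of t] by simp
    finally show ?thesis .
  qed
  have "((\<lambda>t. cos (real 0 * t) / (cos t - r)^i) has_integral CI r i 0) {-pi..0}"
    by (intro CI_has r)
  with h show ?thesis unfolding e by (rule has_integral_unique)
qed

lemma quot_alg: fixes x :: real assumes "x \<noteq> 0"
  shows "(A * k * x^(Suc i) - B * (m * x^i * (- s))) / (x^Suc i)^2 = k * (A / x^Suc i) + m * (B * s) / x^(Suc (Suc i))"
proof -
  have "x^i \<noteq> 0" using assms by simp
  then show ?thesis using assms by (simp add: field_simps power2_eq_square)
qed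

lemma half_alg: fixes X :: real shows "m * ((a - b) / 2) / X = m / 2 * (a / X - b / X)"
  by (simp add: diff_divide_distrib algebra_simps)

lemma IBP: assumes r: "\<bar>r\<bar> > 1"
  shows "2 * real (Suc j) * CI r (Suc i) (Suc j) + real (Suc i) * (CI r (Suc (Suc i)) j - CI r (Suc (Suc i)) (j+2)) = 0"
proof -
  let ?k = "real (Suc j)" and ?m = "real (Suc i)"
  let ?h = "\<lambda>t. sin (?k * t) / (cos t - r)^Suc i"
  let ?f = "\<lambda>m k t. cos (real k * t) / (cos t - r)^m"
  have d: "(?h has_real_derivative (?k * ?f (Suc i) (Suc j) t + ?m / 2 * (?f (Suc (Suc i)) j t - ?f (Suc (Suc i)) (j+2) t))) (at t within {-pi..0})" for t
  proof -
    have ne: "cos t - r \<noteq> 0" using cr_ne[OF r] .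
    have D: "(?h has_real_derivative ((cos (?k * t) * ?k) * (cos t - r)^Suc i - sin (?k * t) * (?m * (cos t - r)^i * (- sin t))) / ((cos t - r)^Suc i)^2) (at t within {-pi..0})"
      apply (rule derivative_eq_intros refl | (simp add: cr_ne'[OF r]; fail))+
      apply (simp add: power2_eq_square)
      done
    have E1: "((cos (?k * t) * ?k) * (cos t - r)^Suc i - sin (?k * t) * (?m * (cos t - r)^i * (- sin t))) / ((cos t - r)^Suc i)^2
      = ?k * ?f (Suc i) (Suc j) t + ?m * (sin (?k * t) * sin t) / (cos t - r)^Suc (Suc i)"
      using quot_alg[OF ne] by simp
    have E2: "?m * (sin (?k * t) * sin t) / (cos t - r)^Suc (Suc i) = ?m / 2 * (?f (Suc (Suc i)) j t - ?f (Suc (Suc i)) (j+2) t)"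
      unfolding sin_prod by (rule half_alg)
    show ?thesis using D unfolding E1 E2 .
  qed
  have I1: "((\<lambda>t. ?k * ?f (Suc i) (Suc j) t + ?m / 2 * (?f (Suc (Suc i)) j t - ?f (Suc (Suc i)) (j+2) t)) has_integral (?h 0 - ?h (-pi))) {-pi..0}"
    apply (rule fundamental_theorem_of_calculus)
     apply simp
    unfolding has_real_derivative_iff_has_vector_derivative [symmetric]
    by (rule d)
  have Z: "?h 0 - ?h (-pi) = 0"
  proof -
    have "sin (?k * (-pi)) = 0"
      by (metis minus_mult_right sin_minus sin_npi neg_equal_0_iff_equal)
    then show ?thesis by simp
  qed
  have I2: "((\<lambda>t. ?k * ?f (Suc i) (Suc j) t + ?m / 2 * (?f (Suc (Suc i)) j t - ?f (Suc (Suc i)) (j+2) t)) has_integral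
     (?k * CI r (Suc i) (Suc j) + ?m / 2 * (CI r (Suc (Suc i)) j - CI r (Suc (Suc i)) (j+2)))) {-pi..0}"
    by (intro has_integral_diff has_integral_add has_integral_mult_right CI_has r)
  have "?k * CI r (Suc i) (Suc j) + ?m / 2 * (CI r (Suc (Suc i)) j - CI r (Suc (Suc i)) (j+2)) = 0"
    using has_integral_unique[OF I2 I1] Z by simp
  moreover have "2 * real (Suc j) * CI r (Suc i) (Suc j) + real (Suc i) * (CI r (Suc (Suc i)) j - CI r (Suc (Suc i)) (j+2))
     = 2 * (?k * CI r (Suc i) (Suc j) + ?m / 2 * (CI r (Suc (Suc i)) j - CI r (Suc (Suc i)) (j+2)))"
    by (simp add: field_simps)
  ultimately show ?thesis by simp
qed

lemma r2gt: fixes r :: real assumes "\<bar>r\<bar> > 1" shows "r\<^sup>2 > 1"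
proof -
  have "1 < \<bar>r\<bar>^2" using assms by (intro one_less_power) auto
  then show ?thesis by simp
qed

lemma sq2: fixes r :: real assumes "\<bar>r\<bar> > 1" shows "(sqrt (r\<^sup>2 - 1))\<^sup>2 = r\<^sup>2 - 1"
  using r2gt[OF assms] by simp

lemma u_alg:
  fixes r c s :: real
  assumes r: "\<bar>r\<bar> > 1" and cs: "s\<^sup>2 = 1 - c\<^sup>2" and rc: "r - c \<noteq> 0"
  shows "1 - ((r*c - 1)/(r - c))\<^sup>2 = (sqrt (r\<^sup>2 - 1) * \<bar>s\<bar> / \<bar>r - c\<bar>)\<^sup>2"
proof -
  have "(sqrt (r\<^sup>2 - 1) * \<bar>s\<bar> / \<bar>r - c\<bar>)\<^sup>2 = (r\<^sup>2 - 1) * s\<^sup>2 / (r - c)\<^sup>2"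
    by (simp add: power_divide power_mult_distrib sq2[OF r])
  also have "\<dots> = ((r - c)\<^sup>2 - (r*c - 1)\<^sup>2) / (r - c)\<^sup>2"
    unfolding cs by (simp add: algebra_simps power2_eq_square)
  also have "\<dots> = 1 - ((r*c - 1)/(r - c))\<^sup>2"
  proof -
    have "(r - c)\<^sup>2 \<noteq> 0" using rc by simp
    then show ?thesis unfolding power_divide by (simp add: diff_divide_distrib)
  qed
  finally show ?thesis by simp
qed

lemma fin_alg:
  fixes r c s q :: real
  assumes q: "q > 0" "q\<^sup>2 = r\<^sup>2 - 1" and s: "s < 0" and r: "\<bar>r\<bar> > 1" and c: "\<bar>c\<bar> \<le> 1"
  shows "0 * arccos a + inverse (- (q * \<bar>s\<bar> / \<bar>r - c\<bar>)) *
     (((0 * c + - s * 1 * r - 0) * (r - c) - (r * c - 1) * (0 - - s * 1)) / ((r - c) * (r - c))) *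
     (\<bar>r\<bar> / r / q) = 1 / (c - r)"
proof -
  have num: "(0 * c + - s * 1 * r - 0) * (r - c) - (r * c - 1) * (0 - - s * 1) = - s * q\<^sup>2"
    unfolding q(2) by (simp add: algebra_simps power2_eq_square)
  have as: "\<bar>s\<bar> = - s" using s by simp
  have sgn: "\<bar>r\<bar> / r * \<bar>r - c\<bar> = r - c"
  proof (cases "r > 0")
    case True
    then have "\<bar>r\<bar> = r" "\<bar>r - c\<bar> = r - c" using r c by auto
    then show ?thesis using True by simp
  next
    case False
    then have "\<bar>r\<bar> = - r" "\<bar>r - c\<bar> = -(r - c)" "r \<noteq> 0" using r c by auto
    then show ?thesis by simp
  qed
  have rc: "r - c \<noteq> 0" using r c by auto
  have ad: "\<bar>r - c\<bar> \<noteq> 0" using rc by simp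
  have "inverse (- (q * \<bar>s\<bar> / \<bar>r - c\<bar>)) = - (\<bar>r - c\<bar> / (q * (-s)))"
    unfolding as by (simp add: inverse_eq_divide)
  then have "0 * arccos a + inverse (- (q * \<bar>s\<bar> / \<bar>r - c\<bar>)) *
     (((0 * c + - s * 1 * r - 0) * (r - c) - (r * c - 1) * (0 - - s * 1)) / ((r - c) * (r - c))) *
     (\<bar>r\<bar> / r / q) = - (\<bar>r - c\<bar> / (q * (-s))) * (- s * q\<^sup>2 / ((r - c) * (r - c))) * (\<bar>r\<bar> / r / q)"
    unfolding num by simp
  also have "\<dots> = - (\<bar>r\<bar> / r * \<bar>r - c\<bar>) / ((r - c) * (r - c))"
    using q s by (simp add: field_simps power2_eq_square)
  also have "\<dots> = 1 / (c - r)"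
  proof -
    have e1: "- (r - c) / ((r - c) * (r - c)) = - (1 / (r - c))"
      using rc by (simp only: minus_divide_left[symmetric]) simp
    have e2: "1 / (c - r) = - (1 / (r - c))"
      by (metis divide_minus_right minus_diff_eq)
    show ?thesis unfolding sgn e1 e2 ..
  qed
  finally show ?thesis .
qed

lemma base_deriv:
  fixes r t :: real
  assumes r: "\<bar>r\<bar> > 1" and t: "-pi < t" "t < 0"
  shows "((\<lambda>t. \<bar>r\<bar>/r / sqrt (r\<^sup>2 - 1) * arccos ((r*cos t - 1)/(r - cos t))) has_real_derivative 1/(cos t - r)) (at t)"
proof -
  have s: "sin t < 0" using sin_gt_zero[of "-t"] t by simp
  have rc: "r - cos t \<noteq> 0" using cr_ne'[OF r, of t] by simp
  have cs: "(sin t)\<^sup>2 = 1 - (cos t)\<^sup>2" by (simp add: sin_squared_eq)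
  have sqp: "sqrt (r\<^sup>2 - 1) > 0" using r2gt[OF r] by simp
  have U: "1 - ((r*cos t - 1)/(r - cos t))\<^sup>2 = (sqrt (r\<^sup>2 - 1) * \<bar>sin t\<bar> / \<bar>r - cos t\<bar>)\<^sup>2"
    by (rule u_alg[OF r cs rc])
  have pos: "sqrt (r\<^sup>2 - 1) * \<bar>sin t\<bar> / \<bar>r - cos t\<bar> > 0"
    using sqp s rc by (intro divide_pos_pos mult_pos_pos) auto
  have sqU: "sqrt (1 - ((r*cos t - 1)/(r - cos t))\<^sup>2) = sqrt (r\<^sup>2 - 1) * \<bar>sin t\<bar> / \<bar>r - cos t\<bar>"
    unfolding U using real_sqrt_unique[OF refl less_imp_le[OF pos]] .
  have "(sqrt (r\<^sup>2 - 1) * \<bar>sin t\<bar> / \<bar>r - cos t\<bar>)\<^sup>2 > 0" using pos by (rule zero_less_power)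
  then have u1: "((r*cos t - 1)/(r - cos t))\<^sup>2 < 1" using U by linarith
  then have "\<bar>(r*cos t - 1)/(r - cos t)\<bar> < 1" by (simp add: abs_square_less_1)
  then have um: "-1 < (r*cos t - 1)/(r - cos t)" "(r*cos t - 1)/(r - cos t) < 1"
    by linarith+
  show ?thesis
    apply (rule derivative_eq_intros refl | (use um rc in simp; fail))+
    unfolding sqU
    by (rule fin_alg[OF sqp sq2[OF r] s r abs_cos_le_one])
qed

lemma u_bound:
  fixes r t :: real assumes r: "\<bar>r\<bar> > 1"
  shows "-1 \<le> (r*cos t - 1)/(r - cos t) \<and> (r*cos t - 1)/(r - cos t) \<le> 1"
proof -
  have rc: "r - cos t \<noteq> 0" using cr_ne'[OF r, of t] by simp
  have cs: "(sin t)\<^sup>2 = 1 - (cos t)\<^sup>2" by (simp add: sin_squared_eq)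
  have U: "1 - ((r*cos t - 1)/(r - cos t))\<^sup>2 = (sqrt (r\<^sup>2 - 1) * \<bar>sin t\<bar> / \<bar>r - cos t\<bar>)\<^sup>2"
    by (rule u_alg[OF r cs rc])
  have "0 \<le> (sqrt (r\<^sup>2 - 1) * \<bar>sin t\<bar> / \<bar>r - cos t\<bar>)\<^sup>2" by (rule zero_le_power2)
  then have "((r*cos t - 1)/(r - cos t))\<^sup>2 \<le> 1" using U by linarith
  then have "\<bar>(r*cos t - 1)/(r - cos t)\<bar> \<le> 1" by (simp add: abs_square_le_1)
  then show ?thesis by linarith
qed

lemma CI_1_0:
  fixes r :: real assumes r: "\<bar>r\<bar> > 1"
  shows "CI r 1 0 = - (\<bar>r\<bar>/r) * pi / sqrt (r\<^sup>2 - 1)"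
proof -
  let ?phi = "\<lambda>t. \<bar>r\<bar>/r / sqrt (r\<^sup>2 - 1) * arccos ((r*cos t - 1)/(r - cos t))"
  have I1: "((\<lambda>t. 1/(cos t - r)) has_integral (?phi 0 - ?phi (-pi))) {-pi..0}"
  proof (rule fundamental_theorem_of_calculus_interior)
    show "continuous_on {-pi..0} ?phi"
    proof -
      have cu: "continuous_on {-pi..0} (\<lambda>t. (r*cos t - 1)/(r - cos t))"
        by (intro continuous_intros) (use cr_ne[OF r] in \<open>auto simp: right_minus_eq\<close>)
      have "continuous_on {-pi..0} (\<lambda>t. arccos ((r*cos t - 1)/(r - cos t)))"
        by (rule continuous_on_arccos[OF cu]) (use u_bound[OF r] in auto)
      then show ?thesis by (rule continuous_on_mult_left)
    qed
    show "(?phi has_vector_derivative 1/(cos t - r)) (at t)" if "t \<in> {-pi<..<0}" for t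
      unfolding has_real_derivative_iff_has_vector_derivative [symmetric]
      using base_deriv[OF r, of t] that by simp
  qed simp
  have V: "?phi 0 - ?phi (-pi) = - (\<bar>r\<bar>/r) * pi / sqrt (r\<^sup>2 - 1)"
  proof -
    have r1: "r - 1 \<noteq> 0" "r + 1 \<noteq> 0" using r by auto
    have a: "(r * cos 0 - 1) / (r - cos 0) = 1" using r1 by simp
    have "(r * cos (-pi) - 1) / (r - cos (-pi)) = (-(r+1)) / (r + 1)" by simp
    also have "\<dots> = -1" using r1 by (simp only: minus_divide_left[symmetric]) simp
    finally have b: "(r * cos (-pi) - 1) / (r - cos (-pi)) = -1" .
    show ?thesis unfolding a b by simp
  qed
  have I2: "((\<lambda>t. 1/(cos t - r)) has_integral CI r 1 0) {-pi..0}"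
    using CI_has[OF r, of 0 1] by simp
  show ?thesis using has_integral_unique[OF I2 I1] V by simp
qed

lemma lin_solve: fixes x y P Q r c :: real assumes "x - y = P" "x + y - 2*r*c = Q"
  shows "x = (P + Q)/2 + r*c" "y = (Q - P)/2 + r*c"
  using assms by (simp_all add: field_simps)

lemma FO: assumes r: "\<bar>r\<bar> > 1"
  shows "CI r (Suc (Suc i)) (Suc j) = r * CI r (Suc (Suc i)) j + (1 + real j / real (Suc i)) * CI r (Suc i) j"
proof (cases j)
  case 0
  then show ?thesis using MUL0[OF r, of "Suc i"] by simp
next
  case (Suc j')
  have m: "real (Suc i) \<noteq> 0" by simp
  have I: "2 * real (Suc j') * CI r (Suc i) (Suc j') + real (Suc i) * (CI r (Suc (Suc i)) j' - CI r (Suc (Suc i)) (j'+2)) = 0"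
    by (rule IBP[OF r])
  have M: "CI r (Suc (Suc i)) (j'+2) + CI r (Suc (Suc i)) j' - 2*r*CI r (Suc (Suc i)) (Suc j') = 2 * CI r (Suc i) (Suc j')"
    by (rule MUL[OF r])
  have "CI r (Suc (Suc i)) (j'+2) - CI r (Suc (Suc i)) j' = 2 * real (Suc j') * CI r (Suc i) (Suc j') / real (Suc i)"
    using I m by (simp add: field_simps)
  note L = lin_solve(1)[OF this M]
  show ?thesis unfolding Suc using L m by (simp add: field_simps)
qed

lemma BK: assumes r: "\<bar>r\<bar> > 1"
  shows "CI r (Suc (Suc i)) j = r * CI r (Suc (Suc i)) (Suc j) + (1 - real (Suc j) / real (Suc i)) * CI r (Suc i) (Suc j)"
proof -
  have m: "real (Suc i) \<noteq> 0" by simp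
  have I: "2 * real (Suc j) * CI r (Suc i) (Suc j) + real (Suc i) * (CI r (Suc (Suc i)) j - CI r (Suc (Suc i)) (j+2)) = 0"
    by (rule IBP[OF r])
  have M: "CI r (Suc (Suc i)) (j+2) + CI r (Suc (Suc i)) j - 2*r*CI r (Suc (Suc i)) (Suc j) = 2 * CI r (Suc i) (Suc j)"
    by (rule MUL[OF r])
  have "CI r (Suc (Suc i)) (j+2) - CI r (Suc (Suc i)) j = 2 * real (Suc j) * CI r (Suc i) (Suc j) / real (Suc i)"
    using I m by (simp add: field_simps)
  note L = lin_solve(2)[OF this M]
  show ?thesis using L m by (simp add: field_simps)
qed

lemma DER: assumes r: "\<bar>r\<bar> > 1"
  shows "(1 - r\<^sup>2) * CI r (Suc (Suc i)) (Suc j) = r * (1 - real (Suc j) / real (Suc i)) * CI r (Suc i) (Suc j) + (1 + real j / real (Suc i)) * CI r (Suc i) j"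
proof -
  have F: "CI r (Suc (Suc i)) (Suc j) = r * CI r (Suc (Suc i)) j + (1 + real j / real (Suc i)) * CI r (Suc i) j"
    by (rule FO[OF r])
  have B: "CI r (Suc (Suc i)) j = r * CI r (Suc (Suc i)) (Suc j) + (1 - real (Suc j) / real (Suc i)) * CI r (Suc i) (Suc j)"
    by (rule BK[OF r])
  show ?thesis using F unfolding B by (simp add: algebra_simps power2_eq_square)
qed

lemma key_poly: fixes r p N :: real assumes "p\<^sup>2 = 2*r*p - 1"
  shows "-4*((6*r\<^sup>2-2)*p\<^sup>2 - 4*r*(r*(1-N)*p\<^sup>2 + N*p) + r*(1-N/2)*(r*(1-N)*p\<^sup>2 + N*p) + ((N+1)/2)*(r*(2-N)*p + (N-1)))
     = p^3*((N\<^sup>2+2*N+3)*(r-p) - 3*(N+1)*r) - p*((N\<^sup>2-2*N+3)*(r-p) - 3*(N-1)*r)"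
  using assms by algebra

lemma rho_d: fixes r :: real assumes r: "\<bar>r\<bar> > 1"
  shows "r - rho r \<noteq> 0 \<and> (r - rho r)\<^sup>2 = r\<^sup>2 - 1 \<and> \<bar>r\<bar> / sqrt (r\<^sup>2 - 1) = r / (r - rho r)
    \<and> - (\<bar>r\<bar>/r) * pi / sqrt (r\<^sup>2 - 1) = - pi / (r - rho r)"
proof -
  define q where "q = sqrt (r\<^sup>2 - 1)"
  have qp: "q > 0" unfolding q_def using r2gt[OF r] by simp
  have q2: "q\<^sup>2 = r\<^sup>2 - 1" unfolding q_def by (rule sq2[OF r])
  show ?thesis
  proof (cases "r > 0")
    case True
    then have a: "\<bar>r\<bar> = r" by simp
    have b: "r - rho r = q" unfolding rho_def q_def using True by simp
    show ?thesis unfolding q_def[symmetric] b a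
    proof (intro conjI)
      show "q \<noteq> 0" using qp by simp
      show "q\<^sup>2 = r\<^sup>2 - 1" by (rule q2)
      show "r / q = r / q" ..
      show "- (r / r) * pi / q = - pi / q" using True by simp
    qed
  next
    case False
    then have a: "\<bar>r\<bar> = - r" and r0: "r \<noteq> 0" using r by auto
    have b: "r - rho r = - q" unfolding rho_def q_def using r0 a by simp
    show ?thesis unfolding q_def[symmetric] b a
    proof (intro conjI)
      show "- q \<noteq> 0" using qp by simp
      show "(- q)\<^sup>2 = r\<^sup>2 - 1" using q2 by simp
      show "- r / q = r / - q" by simp
      show "- (- r / r) * pi / q = - pi / - q" using r0 by simp
    qed
  qed
qed

lemma rho_facts:
  fixes r :: real assumes r: "\<bar>r\<bar> > 1"
  shows "r - rho r \<noteq> 0" "(r - rho r)\<^sup>2 = r\<^sup>2 - 1" "(rho r)\<^sup>2 = 2 * r * rho r - 1"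
    "\<bar>r\<bar> / sqrt (r\<^sup>2 - 1) = r / (r - rho r)"
    "- (\<bar>r\<bar>/r) * pi / sqrt (r\<^sup>2 - 1) = - pi / (r - rho r)"
proof -
  note R = rho_d[OF r]
  show "r - rho r \<noteq> 0" "\<bar>r\<bar> / sqrt (r\<^sup>2 - 1) = r / (r - rho r)"
    "- (\<bar>r\<bar>/r) * pi / sqrt (r\<^sup>2 - 1) = - pi / (r - rho r)" using R by blast+
  have d2: "(r - rho r)\<^sup>2 = r\<^sup>2 - 1" using R by blast
  then show "(r - rho r)\<^sup>2 = r\<^sup>2 - 1" .
  have "(rho r)\<^sup>2 - 2 * r * rho r + 1 = (r - rho r)\<^sup>2 - r\<^sup>2 + 1"
    by (simp add: power2_eq_square algebra_simps)
  then show "(rho r)\<^sup>2 = 2 * r * rho r - 1" using d2 by linarith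
qed

lemma C1_closed:
  fixes r :: real assumes r: "\<bar>r\<bar> > 1"
  shows "CI r 1 k = - pi / (r - rho r) * rho r ^ k"
proof -
  define A where "A = - pi / (r - rho r)"
  define p where "p = rho r"
  have dn: "r - p \<noteq> 0" and p2: "p\<^sup>2 = 2 * r * p - 1" using rho_facts[OF r] unfolding p_def by auto
  have "CI r 1 k = A * p ^ k \<and> CI r 1 (Suc k) = A * p ^ Suc k"
  proof (induction k)
    case 0
    have c0: "CI r 1 0 = A" using CI_1_0[OF r] rho_facts(5)[OF r] unfolding A_def by simp
    have "CI r 1 1 = pi + r * CI r 1 0" using MUL0[OF r, of 0] CI0_0[of r] by simp
    also have "\<dots> = A * p" unfolding c0 A_def p_def[symmetric] using dn by (simp add: field_simps)
    finally show ?case using c0 by simp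
  next
    case (Suc k)
    have e1: "CI r 1 k = A * p ^ k" and e2: "CI r 1 (Suc k) = A * p ^ Suc k" using Suc.IH by auto
    have "CI r 1 (k+2) = 2 * r * CI r 1 (Suc k) - CI r 1 k"
      using MUL[OF r, of 0 k] CI0_Suc[of r k] by simp
    also have "\<dots> = A * p ^ k * (2 * r * p - 1)" unfolding e1 e2 by (simp add: algebra_simps)
    also have "\<dots> = A * p ^ (k+2)" unfolding p2[symmetric] by (simp add: power2_eq_square algebra_simps)
    finally show ?case using e2 by simp
  qed
  then show ?thesis unfolding A_def p_def by simp
qed

lemma pt_poly: fixes C c r x :: real assumes x: "x \<noteq> 0" and xc: "x = c - r"
  shows "C * (1 - c\<^sup>2)\<^sup>2 / x^3 = C * c + 3*r*C + (6*r\<^sup>2-2)*(C/x) + 4*r*(r\<^sup>2-1)*(C/x^2) + (r\<^sup>2-1)\<^sup>2*(C/x^3)"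
proof -
  have c: "c = x + r" using xc by simp
  show ?thesis unfolding c using x by (simp add: field_simps) algebra
qed

lemma theta_main:
  fixes r :: real assumes r: "\<bar>r\<bar> > 1"
  shows "((\<lambda>t. cos (real (Suc (Suc j)) * t) * (sin t)^4 / (cos t - r)^3) has_integral
    ((6*r\<^sup>2-2) * CI r 1 (Suc (Suc j)) + 4*r*(r\<^sup>2-1) * CI r 2 (Suc (Suc j)) + (r\<^sup>2-1)\<^sup>2 * CI r 3 (Suc (Suc j)))) {-pi..0}"
proof -
  let ?n = "Suc (Suc j)"
  let ?f = "\<lambda>m k t. cos (real k * t) / (cos t - r)^m"
  have I: "((\<lambda>t. (?f 0 (j+3) t + ?f 0 (j+1) t)/2 + 3*r*?f 0 ?n t + (6*r\<^sup>2-2)*?f 1 ?n t + 4*r*(r\<^sup>2-1)*?f 2 ?n t + (r\<^sup>2-1)\<^sup>2*?f 3 ?n t)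
     has_integral ((CI r 0 (j+3) + CI r 0 (j+1))/2 + 3*r*CI r 0 ?n + (6*r\<^sup>2-2)*CI r 1 ?n + 4*r*(r\<^sup>2-1)*CI r 2 ?n + (r\<^sup>2-1)\<^sup>2*CI r 3 ?n)) {-pi..0}"
    by (intro has_integral_add has_integral_mult_right has_integral_divide CI_has r)
  have z: "CI r 0 (j+3) = 0" "CI r 0 (j+1) = 0" "CI r 0 ?n = 0"
    using CI0_Suc[of r "j+2"] CI0_Suc[of r j] CI0_Suc[of r "Suc j"] by (simp_all add: numeral_3_eq_3)
  have e: "(?f 0 (j+3) t + ?f 0 (j+1) t)/2 + 3*r*?f 0 ?n t + (6*r\<^sup>2-2)*?f 1 ?n t + 4*r*(r\<^sup>2-1)*?f 2 ?n t + (r\<^sup>2-1)\<^sup>2*?f 3 ?n t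
     = cos (real ?n * t) * (sin t)^4 / (cos t - r)^3" for t
  proof -
    have cs: "cos (real ((j+1)+2) * t) + cos (real (j+1) * t) = 2 * cos t * cos (real (Suc (j+1)) * t)"
      by (rule cos_sum2)
    have cs': "(?f 0 (j+3) t + ?f 0 (j+1) t)/2 = cos (real ?n * t) * cos t"
      using cs by (simp add: numeral_3_eq_3 add.commute)
    have s4: "(sin t)^4 = (1 - (cos t)\<^sup>2)\<^sup>2"
      by (simp add: sin_squared_eq[symmetric] power_mult[symmetric])
    have "cos (real ?n * t) * (sin t)^4 / (cos t - r)^3 = cos (real ?n * t) * cos t + 3*r*cos (real ?n * t)
      + (6*r\<^sup>2-2)*(cos (real ?n * t)/(cos t - r)) + 4*r*(r\<^sup>2-1)*(cos (real ?n * t)/(cos t - r)^2) + (r\<^sup>2-1)\<^sup>2*(cos (real ?n * t)/(cos t - r)^3)"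
      unfolding s4 by (rule pt_poly[OF cr_ne[OF r] refl])
    then show ?thesis unfolding cs' by simp
  qed
  show ?thesis using I unfolding e z by simp
qed

lemma final_alg: fixes r p d P N pi S :: real
  assumes p2: "p\<^sup>2 = 2*r*p - 1" and d: "d = r - p" and dn: "d \<noteq> 0"
  and S: "S = (6*r\<^sup>2-2)*p\<^sup>2 - 4*r*(r*(1-N)*p\<^sup>2 + N*p) + r*(1-N/2)*(r*(1-N)*p\<^sup>2 + N*p) + ((N+1)/2)*(r*(2-N)*p + (N-1))"
  shows "-pi/d * P * S = pi/4 * (P*p^3 * ((N\<^sup>2+2*N+3) - 3*(N+1)*(r/d)) - P*p*((N\<^sup>2-2*N+3) - 3*(N-1)*(r/d)))"
proof -
  define T where "T = p^3*((N\<^sup>2+2*N+3)*(r-p) - 3*(N+1)*r) - p*((N\<^sup>2-2*N+3)*(r-p) - 3*(N-1)*r)"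
  have K: "-4*S = T" unfolding S T_def by (rule key_poly[OF p2])
  have "pi/4 * (P*p^3 * ((N\<^sup>2+2*N+3) - 3*(N+1)*(r/d)) - P*p*((N\<^sup>2-2*N+3) - 3*(N-1)*(r/d))) = pi*P/(4*d) * T"
    unfolding T_def d[symmetric] using dn by (simp add: field_simps)
  also have "\<dots> = -pi/d * P * S" unfolding K[symmetric] using dn by (simp add: field_simps)
  finally show ?thesis by simp
qed

lemma powr32: fixes y :: real assumes "y \<ge> 0" shows "(y\<^sup>2) powr (3/2) = y^3"
proof (cases "y = 0")
  case True then show ?thesis by simp
next
  case False
  then have yp: "y > 0" using assms by simp
  have "(y\<^sup>2) powr (3/2) = (y powr 2) powr (3/2)" using powr_realpow[OF yp, of 2] by simp
  also have "\<dots> = y powr 3" by (simp add: powr_powr)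
  also have "\<dots> = y^3" using powr_realpow[OF yp, of 3] by simp
  finally show ?thesis .
qed

lemma f_cont: fixes r :: real assumes r: "\<bar>r\<bar> > 1"
  shows "continuous_on {-1..1} (\<lambda>s. cheb_T n s * (1 - s\<^sup>2) powr (3/2) / (s - r) ^ 3)"
proof -
  have c1: "continuous_on {-1..1} (\<lambda>s::real. cheb_T n s)"
    unfolding cheb_T_def by (intro continuous_intros) auto
  have c2: "continuous_on {-1..1} (\<lambda>s::real. (1 - s\<^sup>2) powr (3/2))"
  proof (rule continuous_on_powr')
    show "continuous_on {-1..1} (\<lambda>s::real. 1 - s\<^sup>2)" by (intro continuous_intros)
    show "continuous_on {-1..1} (\<lambda>s::real. 3/2::real)" by (intro continuous_intros)
    show "\<forall>x::real\<in>{-1..1}. 0 \<le> 1 - x\<^sup>2 \<and> (1 - x\<^sup>2 = 0 \<longrightarrow> (0::real) < 3/2)"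
    proof -
      have "x\<^sup>2 \<le> 1" if "x \<in> {-1..1}" for x :: real
      proof -
        have "\<bar>x\<bar> \<le> 1" using that by auto
        then show ?thesis by (simp add: abs_square_le_1)
      qed
      then show ?thesis by auto
    qed
  qed
  have ne: "\<forall>s\<in>{-1..1}. (s - r)^3 \<noteq> 0" using r by auto
  show ?thesis
    by (rule continuous_on_divide[OF continuous_on_mult[OF c1 c2]]) (intro continuous_intros, use ne in auto)
qed

lemma subst_step: fixes r :: real assumes r: "\<bar>r\<bar> > 1"
  shows "((\<lambda>t. cos (real n * t) * (sin t)^4 / (cos t - r)^3) has_integral
     integral {-1..1} (\<lambda>s. cheb_T n s * (1 - s\<^sup>2) powr (3/2) / (s - r) ^ 3)) {-pi..0}"
proof -
  let ?f = "\<lambda>s. cheb_T n s * (1 - s\<^sup>2) powr (3/2) / (s - r) ^ 3"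
  have H: "((\<lambda>x. (- sin x) *\<^sub>R ?f (cos x)) has_integral integral {cos (-pi)..cos 0} ?f) {-pi..0}"
  proof (rule has_integral_substitution_strong[of "{}"])
    show "cos ` {-pi..0} \<subseteq> {-1..1}" by auto
    show "continuous_on {-1..1} ?f" by (rule f_cont[OF r])
    show "continuous_on {-pi..0} cos" by (intro continuous_intros)
    show "(cos has_real_derivative - sin x) (at x within {-pi..0})" for x
      by (rule derivative_eq_intros refl | simp)+
  qed auto
  have eq: "(- sin x) *\<^sub>R ?f (cos x) = cos (real n * x) * (sin x)^4 / (cos x - r)^3" if x: "x \<in> {-pi..0}" for x
  proof -
    have x1: "-pi \<le> x" "x \<le> 0" using x by auto
    have sn: "- sin x \<ge> 0" using sin_ge_zero[of "-x"] x1 by simp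
    have a: "cheb_T n (cos x) = cos (real n * x)"
      unfolding cheb_T_def arccos_cos2[OF x1(2) x1(1)] by simp
    have b: "(1 - (cos x)\<^sup>2) powr (3/2) = (- sin x)^3"
      using powr32[OF sn] by (simp add: sin_squared_eq[symmetric])
    show ?thesis unfolding a b by (simp add: power3_eq_cube power4_eq_xxxx)
  qed
  show ?thesis using has_integral_eq[OF eq H] by simp
qed

lemma Suc2_3: "Suc 2 = 3" by simp

theorem mainTheorem13:
  fixes n :: nat and r :: real
  assumes "n \<ge> 2" and "\<bar>r\<bar> > 1"
  shows "integral {-1..1} (\<lambda>s. cheb_T n s * (1 - s\<^sup>2) powr (3/2) / (s - r) ^ 3)
    = pi / 4 * (rho r ^ (n + 1) * ((real n ^ 2 + 2 * real n + 3)
                  - 3 * (real n + 1) * \<bar>r\<bar> / sqrt (r\<^sup>2 - 1))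
              - rho r ^ (n - 1) * ((real n ^ 2 - 2 * real n + 3)
                  - 3 * (real n - 1) * \<bar>r\<bar> / sqrt (r\<^sup>2 - 1)))"
proof -
  note r = assms(2)
  obtain j where nj: "n = Suc (Suc j)" using assms(1) by (metis add_2_eq_Suc le_Suc_ex)
  define p where "p = rho r"
  define d where "d = r - p"
  define A where "A = - pi / d"
  define P where "P = p ^ j"
  define N where "N = real n"
  have dn: "d \<noteq> 0" and p2: "p\<^sup>2 = 2 * r * p - 1" and Q: "\<bar>r\<bar> / sqrt (r\<^sup>2 - 1) = r / d"
    using rho_facts[OF r] unfolding d_def p_def by auto
  have C1: "CI r 1 k = A * p ^ k" for k using C1_closed[OF r, of k] unfolding A_def d_def p_def by simp
  have c1n: "CI r 1 (Suc (Suc j)) = A * P * p\<^sup>2" unfolding C1 P_def by (simp add: power2_eq_square)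
  have c1m: "CI r 1 (Suc j) = A * P * p" unfolding C1 P_def by simp
  have c1l: "CI r 1 j = A * P" unfolding C1 P_def by simp
  have N1: "real (Suc (Suc j)) = N" "real (Suc j) = N - 1" "real j = N - 2" unfolding N_def nj by simp_all
  have D2a: "(1 - r\<^sup>2) * CI r 2 (Suc (Suc j)) = A * P * (r*(1-N)*p\<^sup>2 + N*p)"
    using DER[OF r, of 0 "Suc j", unfolded One_nat_def[symmetric] Suc_1] unfolding c1n c1m N1 by (simp add: algebra_simps)
  have D2b: "(1 - r\<^sup>2) * CI r 2 (Suc j) = A * P * (r*(2-N)*p + (N-1))"
    using DER[OF r, of 0 j, unfolded One_nat_def[symmetric] Suc_1] unfolding c1m c1l N1 by (simp add: algebra_simps)
  have D3: "(1 - r\<^sup>2) * CI r 3 (Suc (Suc j)) = r * (1 - N/2) * CI r 2 (Suc (Suc j)) + ((N+1)/2) * CI r 2 (Suc j)"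
    using DER[OF r, of 1 "Suc j", unfolded One_nat_def[symmetric] Suc_1 Suc2_3] unfolding N1 by (simp add: field_simps)
  define S where "S = (6*r\<^sup>2-2)*p\<^sup>2 - 4*r*(r*(1-N)*p\<^sup>2 + N*p) + r*(1-N/2)*(r*(1-N)*p\<^sup>2 + N*p) + ((N+1)/2)*(r*(2-N)*p + (N-1))"
  have V: "(6*r\<^sup>2-2) * CI r 1 (Suc (Suc j)) + 4*r*(r\<^sup>2-1) * CI r 2 (Suc (Suc j)) + (r\<^sup>2-1)\<^sup>2 * CI r 3 (Suc (Suc j)) = A * P * S"
  proof -
    have e1: "4*r*(r\<^sup>2-1) * CI r 2 (Suc (Suc j)) = -4*r*((1 - r\<^sup>2) * CI r 2 (Suc (Suc j)))" by (simp add: algebra_simps)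
    have e2: "(r\<^sup>2-1)\<^sup>2 * CI r 3 (Suc (Suc j)) = r * (1 - N/2) * ((1 - r\<^sup>2) * CI r 2 (Suc (Suc j))) + ((N+1)/2) * ((1 - r\<^sup>2) * CI r 2 (Suc j))"
    proof -
      have "(r\<^sup>2-1)\<^sup>2 * CI r 3 (Suc (Suc j)) = -(r\<^sup>2-1) * ((1 - r\<^sup>2) * CI r 3 (Suc (Suc j)))"
        by (simp add: power2_eq_square algebra_simps)
      also have "\<dots> = -(r\<^sup>2-1) * (r * (1 - N/2) * CI r 2 (Suc (Suc j)) + ((N+1)/2) * CI r 2 (Suc j))"
        unfolding D3 ..
      also have "\<dots> = r * (1 - N/2) * ((1 - r\<^sup>2) * CI r 2 (Suc (Suc j))) + ((N+1)/2) * ((1 - r\<^sup>2) * CI r 2 (Suc j))"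
        by (simp add: field_simps)
      finally show ?thesis .
    qed
    show ?thesis unfolding e1 e2 D2a D2b c1n S_def by (simp add: field_simps)
  qed
  have I: "integral {-1..1} (\<lambda>s. cheb_T n s * (1 - s\<^sup>2) powr (3/2) / (s - r) ^ 3) = A * P * S"
    unfolding nj using has_integral_unique[OF subst_step[OF r, of "Suc (Suc j)"] theta_main[OF r, of j]] unfolding V .
  have F: "A * P * S = pi/4 * (P*p^3 * ((N\<^sup>2+2*N+3) - 3*(N+1)*(r/d)) - P*p*((N\<^sup>2-2*N+3) - 3*(N-1)*(r/d)))"
    unfolding A_def by (rule final_alg[OF p2 d_def dn S_def])
  have pw: "rho r ^ (n + 1) = P * p^3" "rho r ^ (n - 1) = P * p"
  proof -
    have "n + 1 = j + 3" "n - 1 = j + 1" unfolding nj by simp_all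
    then show "rho r ^ (n + 1) = P * p^3" "rho r ^ (n - 1) = P * p"
      unfolding P_def p_def by (simp_all only: power_add power_one_right)
  qed
  have R: "3 * (N + 1) * \<bar>r\<bar> / sqrt (r\<^sup>2 - 1) = 3*(N+1)*(r/d)" "3 * (N - 1) * \<bar>r\<bar> / sqrt (r\<^sup>2 - 1) = 3*(N-1)*(r/d)"
  proof -
    have "3 * (N + 1) * \<bar>r\<bar> / sqrt (r\<^sup>2 - 1) = 3 * (N + 1) * (\<bar>r\<bar> / sqrt (r\<^sup>2 - 1))"
      by (simp only: times_divide_eq_right)
    then show "3 * (N + 1) * \<bar>r\<bar> / sqrt (r\<^sup>2 - 1) = 3*(N+1)*(r/d)" unfolding Q .
    have "3 * (N - 1) * \<bar>r\<bar> / sqrt (r\<^sup>2 - 1) = 3 * (N - 1) * (\<bar>r\<bar> / sqrt (r\<^sup>2 - 1))"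
      by (simp only: times_divide_eq_right)
    then show "3 * (N - 1) * \<bar>r\<bar> / sqrt (r\<^sup>2 - 1) = 3*(N-1)*(r/d)" unfolding Q .
  qed
  show ?thesis unfolding I F pw N_def[symmetric] R ..
qed

end
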